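(* Fix $d,N\ge1$, scenarios $r^{(1)},\dots,r^{(N)}\in\mathbb{R}^d$, $\alpha\in(0,1)$, $\lambda_\mu\ge0$, $\gamma>0$, bounds $\boldsymbol{\ell}\le\boldsymbol{u}$ in $\mathbb{R}^d$, $w_{\mathrm{prev}}\in\mathbb{R}^d$ and $\tau\ge0$ such that the feasible set $\mathcal{W}=\{w\in\mathbb{R}^d:\mathbf{1}^\top w=1,\ \boldsymbol{\ell}\le w\le\boldsymbol{u},\ \|w-w_{\mathrm{prev}}\|_1\le\tau\}$ is nonempty. For $\mu\in\mathbb{R}^d$ and symmetric $\Sigma\succeq0$ define \[ F(w;\mu,\Sigma)=-\lambda_\mu\mu^\top w+\gamma\,w^\top\Sigma w+\min_{\zeta\in\mathbb{R}}\Big\{\zeta+\frac{1}{(1-\alpha)N}\sum_{i=1}^N\big(-w^\top r^{(i)}-\zeta\big)_+\Big\}, \] and let $\hat w(\mu,\Sigma)$ denote a minimizer of $F(\cdot;\mu,\Sigma)$ over $\mathcal{W}$. Let $\hat\mu\in\mathbb{R}^d$ and symmetric $\hat\Sigma\succeq\lambda_{\min}I$ with $\lambda_{\min}>0$. Then there exist constants $c_\mu,c_\Sigma\ge0$ such that for all $\delta\mu\in\mathbb{R}^d$ and all symmetric $\delta\Sigma$ with $\hat\Sigma+\delta\Sigma\succeq0$, \[ \|\hat w(\hat\mu+\delta\mu,\hat\Sigma+\delta\Sigma)-\hat w(\hat\mu,\hat\Sigma)\|_2\le\frac{c_\mu\|\delta\mu\|_2+c_\Sigma\|\delta\Sigma\|_{\mathrm{op}}}{\lambda_{\min}}.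 \]
   Context: This is the CVaR epigraph quadratic program of a portfolio allocator at level $\alpha$ (portfolio loss $-w^\top r$), with budget, box and $\ell_1$ turnover constraints; $\|\cdot\|_{\mathrm{op}}$ is the spectral norm. The constraint data $(\mathcal{W}$, scenarios, $\alpha,\lambda_\mu,\gamma)$ are held fixed while $(\mu,\Sigma)$ are perturbed. *)

theory Defs
  imports "HOL-Analysis.Analysis"
begin

definition feasible_set ::
  "real^'d \<Rightarrow> real^'d \<Rightarrow> real^'d \<Rightarrow> real \<Rightarrow> (real^'d) set" where
  "feasible_set l u wprev tau =
     {w. (\<Sum>i\<in>UNIV. w $ i) = 1 \<and> (\<forall>i. l $ i \<le> w $ i \<and> w $ i \<le> u $ i)
         \<and> (\<Sum>i\<in>UNIV. \<bar>w $ i - wprev $ i\<bar>) \<le> tau}"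

definition pos_part :: "real \<Rightarrow> real" where
  "pos_part x = max x 0"

text \<open>CVaR term (Rockafellar-Uryasev): the minimum over zeta, written as infimum
  (the minimum is attained). Scenarios indexed by a finite type 'n, N = CARD('n).\<close>
definition cvar_term :: "real \<Rightarrow> ('n::finite \<Rightarrow> real^'d) \<Rightarrow> real^'d \<Rightarrow> real" where
  "cvar_term alpha r w =
     (INF zeta. zeta + (1 / ((1 - alpha) * real CARD('n))) *
        (\<Sum>i\<in>UNIV. pos_part (- (w \<bullet> r i) - zeta)))"

definition objF ::
  "real \<Rightarrow> real \<Rightarrow> real \<Rightarrow> ('n::finite \<Rightarrow> real^'d) \<Rightarrow> real^'d \<Rightarrow> real^'d^'d \<Rightarrow> real^'d \<Rightarrow> real" where
  "objF lam_mu gamma alpha r mu S w =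
     - lam_mu * (mu \<bullet> w) + gamma * (w \<bullet> (S *v w)) + cvar_term alpha r w"

definition sym_mat :: "real^'d^'d \<Rightarrow> bool" where
  "sym_mat A \<longleftrightarrow> transpose A = A"

definition psd_ge :: "real^'d^'d \<Rightarrow> real \<Rightarrow> bool" where
  "psd_ge A c \<longleftrightarrow> (\<forall>x. c * (x \<bullet> x) \<le> x \<bullet> (A *v x))"

definition is_minimizer_on :: "(real^'d \<Rightarrow> real) \<Rightarrow> (real^'d) set \<Rightarrow> real^'d \<Rightarrow> bool" where
  "is_minimizer_on f S w \<longleftrightarrow> w \<in> S \<and> (\<forall>v\<in>S. f w \<le> f v)"

definition op_norm :: "real^'d^'d \<Rightarrow> real" where
  "op_norm A = onorm (\<lambda>x. A *v x)"

end

theory Submission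
  imports Defs
begin

lemma pos_part_mid: "pos_part ((x+y)/2) \<le> (pos_part x + pos_part y)/2"
  unfolding pos_part_def by (simp add: max_def)

lemma pos_part_ge: "x \<le> pos_part x" "0 \<le> pos_part x"
  unfolding pos_part_def by auto

lemma cvar_bdd:
  fixes r :: "'n::finite \<Rightarrow> real^'d"
  assumes "0 < alpha" "alpha < 1"
  shows "bdd_below (range (\<lambda>zeta. zeta + (1 / ((1 - alpha) * real CARD('n))) *
        (\<Sum>i\<in>UNIV. pos_part (- (w \<bullet> r i) - zeta))))"
proof -
  define c where "c = 1 / ((1 - alpha) * real CARD('n))"
  define S where "S = (\<Sum>i\<in>UNIV. \<bar>w \<bullet> r i\<bar>)"
  have c0: "0 \<le> c" using assms by (simp add: c_def)
  have cN: "1 \<le> c * real CARD('n)" using assms by (simp add: c_def field_simps)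
  have "min 0 (- c * S) \<le> z + c * (\<Sum>i\<in>UNIV. pos_part (- (w \<bullet> r i) - z))" for z
  proof -
    have s0: "0 \<le> (\<Sum>i\<in>UNIV. pos_part (- (w \<bullet> r i) - z))"
      by (intro sum_nonneg) (simp add: pos_part_ge)
    have "(\<Sum>i\<in>UNIV. (- (w \<bullet> r i) - z)) \<le> (\<Sum>i\<in>UNIV. pos_part (- (w \<bullet> r i) - z))"
      by (intro sum_mono) (simp add: pos_part_ge)
    moreover have "(\<Sum>i\<in>UNIV. (- (w \<bullet> r i) - z)) \<ge> - S - real CARD('n) * z"
    proof -
      have "(\<Sum>i\<in>UNIV. (- (w \<bullet> r i) - z)) = - (\<Sum>i\<in>UNIV. w \<bullet> r i) - real CARD('n) * z"
        by (simp add: sum_subtractf sum_negf)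
      moreover have "(\<Sum>i\<in>UNIV. w \<bullet> r i) \<le> S" unfolding S_def
        by (intro sum_mono) auto
      ultimately show ?thesis by linarith
    qed
    ultimately have s1: "- S - real CARD('n) * z \<le> (\<Sum>i\<in>UNIV. pos_part (- (w \<bullet> r i) - z))"
      by linarith
    show ?thesis
    proof (cases "0 \<le> z")
      case True
      then show ?thesis using mult_nonneg_nonneg[OF c0 s0] by linarith
    next
      case False
      have "c * (- S - real CARD('n) * z) \<le> c * (\<Sum>i\<in>UNIV. pos_part (- (w \<bullet> r i) - z))"
        using mult_left_mono[OF s1 c0] .
      moreover have "z * (1 - c * real CARD('n)) \<ge> 0"
        using False cN by (intro mult_nonpos_nonpos) auto
      ultimately show ?thesis by (simp add: algebra_simps)
    qed
  qed
  then show ?thesis unfolding c_def by (intro bdd_belowI2) 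
qed

lemma aux_lin: "(x::real) \<le> p \<Longrightarrow> p \<le> (q+s)/2 \<Longrightarrow> 2*x - s \<le> q"
  by (simp add: field_simps)

lemma cvar_mid:
  fixes r :: "'n::finite \<Rightarrow> real^'d"
  assumes "0 < alpha" "alpha < 1"
  shows "cvar_term alpha r ((1/2) *\<^sub>R (a + b)) \<le> (cvar_term alpha r a + cvar_term alpha r b) / 2"
proof -
  define c where "c = 1 / ((1 - alpha) * real CARD('n))"
  define phi where "phi = (\<lambda>w zeta. zeta + c * (\<Sum>i\<in>UNIV. pos_part (- (w \<bullet> r i) - zeta)))"
  have c0: "0 \<le> c" using assms by (simp add: c_def)
  have h: "cvar_term alpha r w = (INF z. phi w z)" for w
    unfolding cvar_term_def phi_def c_def ..
  have bdd: "bdd_below (range (phi w))" for w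
    using cvar_bdd[OF assms, of w r] unfolding phi_def c_def .
  have key: "phi ((1/2) *\<^sub>R (a + b)) ((z1+z2)/2) \<le> (phi a z1 + phi b z2)/2" for z1 z2
  proof -
    have "(\<Sum>i\<in>UNIV. pos_part (- (((1/2) *\<^sub>R (a + b)) \<bullet> r i) - (z1+z2)/2))
      \<le> (\<Sum>i\<in>UNIV. (pos_part (- (a \<bullet> r i) - z1) + pos_part (- (b \<bullet> r i) - z2))/2)"
    proof (intro sum_mono)
      fix i
      have eq: "- (((1/2) *\<^sub>R (a + b)) \<bullet> r i) - (z1+z2)/2 = ((- (a \<bullet> r i) - z1) + (- (b \<bullet> r i) - z2))/2"
        by (simp add: inner_add_left algebra_simps)
      show "pos_part (- (((1/2) *\<^sub>R (a + b)) \<bullet> r i) - (z1+z2)/2)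
        \<le> (pos_part (- (a \<bullet> r i) - z1) + pos_part (- (b \<bullet> r i) - z2))/2"
        by (subst eq) (rule pos_part_mid)
    qed
    also have "\<dots> = ((\<Sum>i\<in>UNIV. pos_part (- (a \<bullet> r i) - z1)) + (\<Sum>i\<in>UNIV. pos_part (- (b \<bullet> r i) - z2)))/2"
      by (simp add: sum.distrib flip: sum_divide_distrib)
    finally have "c * (\<Sum>i\<in>UNIV. pos_part (- (((1/2) *\<^sub>R (a + b)) \<bullet> r i) - (z1+z2)/2))
       \<le> c * (((\<Sum>i\<in>UNIV. pos_part (- (a \<bullet> r i) - z1)) + (\<Sum>i\<in>UNIV. pos_part (- (b \<bullet> r i) - z2)))/2)"
      by (rule mult_left_mono[OF _ c0])
    then show ?thesis unfolding phi_def by (simp add: algebra_simps add_divide_distrib)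
  qed
  have "2 * cvar_term alpha r ((1/2) *\<^sub>R (a + b)) - phi b z2 \<le> cvar_term alpha r a" for z2
  proof -
    have "2 * cvar_term alpha r ((1/2) *\<^sub>R (a + b)) - phi b z2 \<le> phi a z1" for z1
    proof -
      have "cvar_term alpha r ((1/2) *\<^sub>R (a + b)) \<le> phi ((1/2) *\<^sub>R (a + b)) ((z1+z2)/2)"
        unfolding h by (rule cINF_lower[OF bdd]) simp
      then show ?thesis by (rule aux_lin[OF _ key[of z1 z2]])
    qed
    then show ?thesis unfolding h[of a] by (intro cINF_greatest) auto
  qed
  then have "2 * cvar_term alpha r ((1/2) *\<^sub>R (a + b)) - cvar_term alpha r a \<le> phi b z2" for z2
    by (smt (verit))
  then have "2 * cvar_term alpha r ((1/2) *\<^sub>R (a + b)) - cvar_term alpha r a \<le> cvar_term alpha r b"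
    unfolding h[of b] by (intro cINF_greatest) auto
  then show ?thesis by (simp add: field_simps)
qed

lemma quad_mid:
  fixes S :: "real^'d^'d"
  shows "((1/2) *\<^sub>R (a + b)) \<bullet> (S *v ((1/2) *\<^sub>R (a + b))) =
    (a \<bullet> (S *v a) + b \<bullet> (S *v b))/2 - (b - a) \<bullet> (S *v (b - a)) / 4"
  apply (simp add: matrix_vector_mult_scaleR matrix_vector_right_distrib matrix_vector_mult_diff_distrib
      inner_add_left inner_add_right inner_diff_left inner_diff_right algebra_simps)
  by (simp add: field_simps)

lemma sym_inner:
  fixes A :: "real^'d^'d"
  assumes "sym_mat A"
  shows "x \<bullet> (A *v y) = y \<bullet> (A *v x)"
proof -
  have "x \<bullet> (A *v y) = (x v* A) \<bullet> y" by (simp add: dot_lmul_matrix)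
  also have "x v* A = x v* transpose A" using assms unfolding sym_mat_def by simp
  also have "\<dots> = A *v x" by simp
  finally show ?thesis by (simp add: inner_commute)
qed

lemma sym_add: "sym_mat A \<Longrightarrow> sym_mat B \<Longrightarrow> sym_mat (A + B)"
  unfolding sym_mat_def by (simp add: vec_eq_iff transpose_def)

lemma feasible_mid:
  assumes "a \<in> feasible_set l u wprev tau" "b \<in> feasible_set l u wprev tau"
  shows "(1/2) *\<^sub>R (a + b) \<in> feasible_set l u wprev tau"
proof -
  have sa: "(\<Sum>i\<in>UNIV. a $ i) = 1" and sb: "(\<Sum>i\<in>UNIV. b $ i) = 1"
    using assms unfolding feasible_set_def by auto
  have ba: "\<forall>i. l $ i \<le> a $ i \<and> a $ i \<le> u $ i" and bb: "\<forall>i. l $ i \<le> b $ i \<and> b $ i \<le> u $ i"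
    using assms unfolding feasible_set_def by auto
  have ta: "(\<Sum>i\<in>UNIV. \<bar>a $ i - wprev $ i\<bar>) \<le> tau" and tb: "(\<Sum>i\<in>UNIV. \<bar>b $ i - wprev $ i\<bar>) \<le> tau"
    using assms unfolding feasible_set_def by auto
  have 1: "(\<Sum>i\<in>UNIV. ((1/2) *\<^sub>R (a + b)) $ i) = 1"
    using sa sb by (simp add: sum.distrib flip: sum_divide_distrib)
  have 2: "\<forall>i. l $ i \<le> ((1/2) *\<^sub>R (a + b)) $ i \<and> ((1/2) *\<^sub>R (a + b)) $ i \<le> u $ i"
    using ba bb by (simp add: field_simps) (smt (verit))
  have "(\<Sum>i\<in>UNIV. \<bar>((1/2) *\<^sub>R (a + b)) $ i - wprev $ i\<bar>)
     \<le> (\<Sum>i\<in>UNIV. (\<bar>a $ i - wprev $ i\<bar> + \<bar>b $ i - wprev $ i\<bar>) / 2)"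
    by (intro sum_mono) (simp add: field_simps abs_if)
  also have "\<dots> = ((\<Sum>i\<in>UNIV. \<bar>a $ i - wprev $ i\<bar>) + (\<Sum>i\<in>UNIV. \<bar>b $ i - wprev $ i\<bar>)) / 2"
    by (simp add: sum.distrib flip: sum_divide_distrib)
  also have "\<dots> \<le> tau" using ta tb by (simp add: field_simps)
  finally show ?thesis using 1 2 unfolding feasible_set_def by auto
qed

lemma feasible_bound:
  assumes "a \<in> feasible_set l u wprev tau"
  shows "norm a \<le> (\<Sum>i\<in>UNIV. \<bar>l $ i\<bar> + \<bar>u $ i\<bar>)"
proof -
  have ba: "\<forall>i. l $ i \<le> a $ i \<and> a $ i \<le> u $ i"
    using assms unfolding feasible_set_def by auto
  have "norm a \<le> (\<Sum>i\<in>UNIV. \<bar>a $ i\<bar>)" by (rule norm_le_l1_cart)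
  also have "\<dots> \<le> (\<Sum>i\<in>UNIV. \<bar>l $ i\<bar> + \<bar>u $ i\<bar>)"
    using ba by (intro sum_mono) (smt (verit))
  finally show ?thesis .
qed

theorem mainTheorem4:
  fixes r :: "'n::finite \<Rightarrow> real^'d"
    and alpha lam_mu gamma tau lam_min :: real
    and l u wprev mu0 :: "real^'d"
    and Sigma0 :: "real^'d^'d"
    and what :: "real^'d \<Rightarrow> real^'d^'d \<Rightarrow> real^'d"
  assumes "0 < alpha" "alpha < 1" "0 \<le> lam_mu" "0 < gamma"
    and "\<forall>i. l $ i \<le> u $ i" "0 \<le> tau"
    and "feasible_set l u wprev tau \<noteq> {}"
    and "\<forall>mu S. sym_mat S \<and> psd_ge S 0 \<longrightarrow>
           is_minimizer_on (objF lam_mu gamma alpha r mu S)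
             (feasible_set l u wprev tau) (what mu S)"
    and "sym_mat Sigma0" "0 < lam_min" "psd_ge Sigma0 lam_min"
  shows "\<exists>c_mu c_Sigma. 0 \<le> c_mu \<and> 0 \<le> c_Sigma \<and>
    (\<forall>dmu dSigma. sym_mat dSigma \<and> psd_ge (Sigma0 + dSigma) 0 \<longrightarrow>
       norm (what (mu0 + dmu) (Sigma0 + dSigma) - what mu0 Sigma0)
         \<le> (c_mu * norm dmu + c_Sigma * op_norm dSigma) / lam_min)"
proof -
  define D where "D = feasible_set l u wprev tau"
  define B where "B = (\<Sum>i\<in>UNIV. \<bar>l $ i\<bar> + \<bar>u $ i\<bar>)"
  define h where "h = cvar_term alpha r"
  have B0: "0 \<le> B" unfolding B_def by (intro sum_nonneg) auto
  have psd0: "psd_ge Sigma0 0"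
    unfolding psd_ge_def
  proof
    fix x :: "real^'d"
    have "0 \<le> lam_min * (x \<bullet> x)" using assms(10) by simp
    also have "\<dots> \<le> x \<bullet> (Sigma0 *v x)" using assms(11) unfolding psd_ge_def by blast
    finally show "0 * (x \<bullet> x) \<le> x \<bullet> (Sigma0 *v x)" by simp
  qed
  have objF_eq: "objF lam_mu gamma alpha r mu S w = - lam_mu * (mu \<bullet> w) + gamma * (w \<bullet> (S *v w)) + h w"
    for mu S w unfolding objF_def h_def ..
  have "\<forall>dmu dSigma. sym_mat dSigma \<and> psd_ge (Sigma0 + dSigma) 0 \<longrightarrow>
       norm (what (mu0 + dmu) (Sigma0 + dSigma) - what mu0 Sigma0)
         \<le> ((2 * lam_mu / gamma) * norm dmu + (4 * B) * op_norm dSigma) / lam_min"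
  proof (intro allI impI)
    fix dmu and dSigma :: "real^'d^'d"
    assume H: "sym_mat dSigma \<and> psd_ge (Sigma0 + dSigma) 0"
    define w0 where "w0 = what mu0 Sigma0"
    define w1 where "w1 = what (mu0 + dmu) (Sigma0 + dSigma)"
    define Dl where "Dl = w1 - w0"
    define F0 where "F0 = objF lam_mu gamma alpha r mu0 Sigma0"
    define F1 where "F1 = objF lam_mu gamma alpha r (mu0 + dmu) (Sigma0 + dSigma)"
    have m0: "w0 \<in> D" "\<forall>v\<in>D. F0 w0 \<le> F0 v"
      using assms(8) assms(9) psd0 unfolding w0_def F0_def D_def is_minimizer_on_def by auto
    have m1: "w1 \<in> D" "\<forall>v\<in>D. F1 w1 \<le> F1 v"
      using assms(8) sym_add[OF assms(9)] H unfolding w1_def F1_def D_def is_minimizer_on_def by auto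
    define m where "m = (1/2) *\<^sub>R (w0 + w1)"
    have mD: "m \<in> D" unfolding m_def D_def using m0(1) m1(1) unfolding D_def by (rule feasible_mid)
    have "F0 m \<le> (F0 w0 + F0 w1)/2 - gamma * (Dl \<bullet> (Sigma0 *v Dl)) / 4"
    proof -
      have hm: "h m \<le> (h w0 + h w1)/2" unfolding m_def h_def by (rule cvar_mid[OF assms(1,2)])
      have q: "m \<bullet> (Sigma0 *v m) = (w0 \<bullet> (Sigma0 *v w0) + w1 \<bullet> (Sigma0 *v w1))/2 - Dl \<bullet> (Sigma0 *v Dl) / 4"
        unfolding m_def Dl_def by (rule quad_mid)
      have lin: "mu0 \<bullet> m = (mu0 \<bullet> w0 + mu0 \<bullet> w1)/2"
        unfolding m_def by (simp add: inner_add_right)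
      show ?thesis unfolding F0_def objF_eq lin q using hm by (simp add: field_simps)
    qed
    moreover have "F0 w0 \<le> F0 m" using m0(2) mD by auto
    ultimately have s0: "gamma * (Dl \<bullet> (Sigma0 *v Dl)) / 2 \<le> F0 w1 - F0 w0" by (simp add: field_simps)
    have s1: "F1 w1 \<le> F1 w0" using m1(2) m0(1) by auto
    have diff: "F1 w - F0 w = - lam_mu * (dmu \<bullet> w) + gamma * (w \<bullet> (dSigma *v w))" for w
      unfolding F0_def F1_def objF_eq
      by (simp add: matrix_vector_mult_add_rdistrib inner_add_left inner_add_right algebra_simps)
    have symd: "w0 \<bullet> (dSigma *v w1) = w1 \<bullet> (dSigma *v w0)" using H sym_inner by blast
    have ident: "w1 \<bullet> (dSigma *v w1) - w0 \<bullet> (dSigma *v w0) = Dl \<bullet> (dSigma *v (w1 + w0))"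
      unfolding Dl_def using symd
      by (simp add: matrix_vector_right_distrib inner_add_right inner_diff_left algebra_simps)
    have key: "gamma * (Dl \<bullet> (Sigma0 *v Dl)) / 2 \<le> lam_mu * (dmu \<bullet> Dl) - gamma * (Dl \<bullet> (dSigma *v (w1 + w0)))"
    proof -
      have "gamma * (Dl \<bullet> (Sigma0 *v Dl)) / 2 \<le> (F0 w1 - F1 w1) + (F1 w0 - F0 w0)"
        using s0 s1 by linarith
      also have "\<dots> = lam_mu * (dmu \<bullet> w1) - lam_mu * (dmu \<bullet> w0) - gamma * (w1 \<bullet> (dSigma *v w1) - w0 \<bullet> (dSigma *v w0))"
        using diff[of w1] diff[of w0] by (simp add: algebra_simps)
      also have "\<dots> = lam_mu * (dmu \<bullet> Dl) - gamma * (Dl \<bullet> (dSigma *v (w1 + w0)))"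
        unfolding ident by (simp add: Dl_def inner_diff_right algebra_simps)
      finally show ?thesis .
    qed
    have lo: "lam_min * (norm Dl)^2 \<le> Dl \<bullet> (Sigma0 *v Dl)"
      using assms(11) unfolding psd_ge_def by (simp add: power2_norm_eq_inner)
    have t1: "dmu \<bullet> Dl \<le> norm dmu * norm Dl" by (rule norm_cauchy_schwarz)
    have nw: "norm (w1 + w0) \<le> 2 * B"
      using feasible_bound[OF m1(1)[unfolded D_def]] feasible_bound[OF m0(1)[unfolded D_def]]
        norm_triangle_ineq[of w1 w0] unfolding B_def by linarith
    have t2: "- (Dl \<bullet> (dSigma *v (w1 + w0))) \<le> norm Dl * (op_norm dSigma * (2 * B))"
    proof -
      have "- (Dl \<bullet> (dSigma *v (w1 + w0))) \<le> norm Dl * norm (dSigma *v (w1 + w0))"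
        using norm_cauchy_schwarz[of "- Dl" "dSigma *v (w1 + w0)"] by simp
      also have "norm (dSigma *v (w1 + w0)) \<le> op_norm dSigma * norm (w1 + w0)"
        unfolding op_norm_def by (rule onorm) simp
      also have "\<dots> \<le> op_norm dSigma * (2 * B)"
        using nw by (intro mult_left_mono) (auto simp: op_norm_def intro: onorm_pos_le)
      finally show ?thesis by (simp add: mult_left_mono)
    qed
    have main: "gamma * lam_min * (norm Dl)^2 / 2 \<le> norm Dl * (lam_mu * norm dmu + gamma * op_norm dSigma * (2 * B))"
    proof -
      have "gamma * lam_min * (norm Dl)^2 / 2 \<le> gamma * (Dl \<bullet> (Sigma0 *v Dl)) / 2"
        using mult_left_mono[OF lo, of gamma] assms(4) by simp
      also have "\<dots> \<le> lam_mu * (dmu \<bullet> Dl) - gamma * (Dl \<bullet> (dSigma *v (w1 + w0)))" by (rule key)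
      also have "\<dots> \<le> lam_mu * (norm dmu * norm Dl) + gamma * (norm Dl * (op_norm dSigma * (2 * B)))"
        using mult_left_mono[OF t1 assms(3)] mult_left_mono[OF t2, of gamma] assms(4) by simp
      finally show ?thesis by (simp add: algebra_simps)
    qed
    show "norm (what (mu0 + dmu) (Sigma0 + dSigma) - what mu0 Sigma0)
         \<le> ((2 * lam_mu / gamma) * norm dmu + (4 * B) * op_norm dSigma) / lam_min"
    proof (cases "norm Dl = 0")
      case True
      have "0 \<le> ((2 * lam_mu / gamma) * norm dmu + (4 * B) * op_norm dSigma) / lam_min"
        using assms(3,4,10) B0 by (auto intro!: divide_nonneg_pos add_nonneg_nonneg mult_nonneg_nonneg
            simp: op_norm_def onorm_pos_le)
      then show ?thesis using True unfolding Dl_def w0_def w1_def by simp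
    next
      case False
      then have np: "0 < norm Dl" by simp
      have "gamma * lam_min * norm Dl / 2 \<le> lam_mu * norm dmu + gamma * op_norm dSigma * (2 * B)"
      proof (rule mult_right_le_imp_le[OF _ np])
        show "gamma * lam_min * norm Dl / 2 * norm Dl \<le> (lam_mu * norm dmu + gamma * op_norm dSigma * (2 * B)) * norm Dl"
          using main by (simp add: power2_eq_square algebra_simps)
      qed
      then have "norm Dl \<le> 2 * (lam_mu * norm dmu + gamma * op_norm dSigma * (2 * B)) / (gamma * lam_min)"
        using assms(4,10) by (simp add: field_simps)
      also have "\<dots> = ((2 * lam_mu / gamma) * norm dmu + (4 * B) * op_norm dSigma) / lam_min"
        using assms(4,10) by (simp add: field_simps)
      finally show ?thesis unfolding Dl_def w0_def w1_def .
    qed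
  qed
  moreover have "0 \<le> 2 * lam_mu / gamma" "0 \<le> 4 * B" using assms(3,4) B0 by auto
  ultimately show ?thesis by blast
qed

end
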